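(* Let $\mathbf I\subset\mathbb R$ be a bounded interval, $\sigma\in(0,1]$, and $\mathcal Q$ a collection of real-valued measurable functions on $\mathbf I$. Let $L:L^2(\mathbf I)\to\mathbb C$ be a bounded sub-linear functional, let $\mathbf S_\sigma$ be the set of all $f\in L^2(\mathbf I)$ that are $\sigma$-uniform in $\mathcal Q$, and set $$U_\sigma=\sup_{f\in\mathbf S_\sigma,\,f\ne0}\frac{|L(f)|}{\|f\|_{L^2(\mathbf I)}},\qquad Q=\sup_{q\in\mathcal Q}|L(e^{iq})|.$$ Then for all $f\in L^2(\mathbf I)$, $$|L(f)|\le\max\{U_\sigma,\,2\sigma^{-1}Q\}\,\|f\|_{L^2(\mathbf I)}.$$
   Context: A function $f\in L^2(\mathbf I)$ is $\sigma$-uniform in $\mathcal Q$ if $\big|\int_{\mathbf I}f(\xi)e^{-iq(\xi)}d\xi\big|\le\sigma\|f\|_{L^2(\mathbf I)}$ for all $q\in\mathcal Q$; otherwise it is $\sigma$-nonuniform. Sub-linear means $|L(f+g)|\le|L(f)|+|L(g)|$ and $|L(cf)|=|c||L(f)|$ for all $f,g\in L^2(\mathbf I)$, $c\in\mathbb C$; bounded means $|L(f)|\le A\|f\|_{L^2(\mathbf I)}$ for some $A<\infty$. Here $e^{iq}$ denotes the function $\xi\mapsto e^{iq(\xi)}$ on $\mathbf I$. *)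

theory Defs
  imports "HOL-Analysis.Analysis"
begin

text \<open>L^2(I): complex-valued Lebesgue measurable functions on I (represented as
functions on the reals; values outside I are irrelevant) with square-integrable modulus.\<close>
definition L2 :: "real set \<Rightarrow> (real \<Rightarrow> complex) set" where
  "L2 I = {f. f \<in> borel_measurable (lebesgue_on I) \<and>
               integrable (lebesgue_on I) (\<lambda>x. (cmod (f x))\<^sup>2)}"

definition L2norm :: "real set \<Rightarrow> (real \<Rightarrow> complex) \<Rightarrow> real" where
  "L2norm I f = sqrt (LINT x|lebesgue_on I. (cmod (f x))\<^sup>2)"

definition expi :: "(real \<Rightarrow> real) \<Rightarrow> real \<Rightarrow> complex" where
  "expi q = (\<lambda>\<xi>. exp (\<i> * complex_of_real (q \<xi>)))"

definition sigma_uniform ::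
  "real set \<Rightarrow> real \<Rightarrow> (real \<Rightarrow> real) set \<Rightarrow> (real \<Rightarrow> complex) \<Rightarrow> bool" where
  "sigma_uniform I \<sigma> \<Q> f \<longleftrightarrow>
     (\<forall>q\<in>\<Q>. cmod (LINT \<xi>|lebesgue_on I. f \<xi> * exp (- \<i> * complex_of_real (q \<xi>)))
              \<le> \<sigma> * L2norm I f)"

definition sublinear_on :: "(real \<Rightarrow> complex) set \<Rightarrow> ((real \<Rightarrow> complex) \<Rightarrow> complex) \<Rightarrow> bool" where
  "sublinear_on V L \<longleftrightarrow>
     (\<forall>f\<in>V. \<forall>g\<in>V. cmod (L (\<lambda>x. f x + g x)) \<le> cmod (L f) + cmod (L g)) \<and>
     (\<forall>f\<in>V. \<forall>c::complex. cmod (L (\<lambda>x. c * f x)) = cmod c * cmod (L f))"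

definition bounded_functional :: "real set \<Rightarrow> ((real \<Rightarrow> complex) \<Rightarrow> complex) \<Rightarrow> bool" where
  "bounded_functional I L \<longleftrightarrow> (\<exists>A::real. \<forall>f\<in>L2 I. cmod (L f) \<le> A * L2norm I f)"

end

theory Submission
  imports Defs
begin

lemma pw: fixes f c e :: complex shows "(cmod (f - c*e))^2 = (cmod f)^2 - 2 * Re (cnj c * f * cnj e) + (cmod c)^2 * (cmod e)^2"
  unfolding cmod_power2 by (simp add: power2_eq_square algebra_simps)

lemma decomp:
  fixes M :: "real measure" and f e :: "real \<Rightarrow> complex"
  assumes fin: "finite_measure M" and mpos: "measure M (space M) > 0"
   and fm: "f \<in> borel_measurable M" and fi: "integrable M (\<lambda>x. (cmod (f x))^2)"
   and em: "e \<in> borel_measurable M" and e1: "\<And>x. x \<in> space M \<Longrightarrow> cmod (e x) = 1"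
  and a_def: "a = (LINT x|M. f x * cnj (e x))" and c_def: "c = a / of_real (measure M (space M))"
  shows "(\<lambda>x. f x - c * e x) \<in> borel_measurable M"
    "integrable M (\<lambda>x. (cmod (f x - c * e x))^2)"
    "(LINT x|M. (cmod (f x - c*e x))^2) = (LINT x|M. (cmod (f x))^2) - (cmod a)^2 / measure M (space M)"
proof -
  interpret finite_measure M by (rule fin)
  define m where "m = measure M (space M)"
  show "(\<lambda>x. f x - c * e x) \<in> borel_measurable M" using fm em by measurable
  have cm: "(\<lambda>x. cnj (e x)) \<in> borel_measurable M"
    using measurable_compose[OF em borel_measurable_continuous_onI[OF continuous_on_cnj[OF continuous_on_id]]] by simp
  have int1: "integrable M (\<lambda>x. f x * cnj (e x))"
  proof (rule Bochner_Integration.integrable_bound[of M "\<lambda>x. 1 + (cmod (f x))^2"])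
    show "integrable M (\<lambda>x. 1 + (cmod (f x))^2)" using fi by simp
    show "(\<lambda>x. f x * cnj (e x)) \<in> borel_measurable M" using fm cm by measurable
    show "AE x in M. norm (f x * cnj (e x)) \<le> norm (1 + (cmod (f x))^2)"
    proof (rule AE_I2)
      fix x assume "x \<in> space M"
      then have nn: "norm (f x * cnj (e x)) = cmod (f x)" using e1 by (simp add: norm_mult)
      have t2: "2 * cmod (f x) \<le> 1 + (cmod (f x))^2" using zero_le_power2[of "cmod (f x) - 1"] unfolding power2_eq_square by (simp add: algebra_simps)
      have "cmod (f x) \<le> 1 + (cmod (f x))^2" using t2 norm_ge_zero[of "f x"] by linarith
      then show "norm (f x * cnj (e x)) \<le> norm (1 + (cmod (f x))^2)" using nn by simp
    qed
  qed
  have int2: "integrable M (\<lambda>x. Re (cnj c * (f x * cnj (e x))))"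
    by (rule integrable_Re[OF integrable_mult_right[OF int1]])
  have pwx: "(cmod (f x - c*e x))^2 = (cmod (f x))^2 - 2 * Re (cnj c * (f x * cnj (e x))) + (cmod c)^2"
    if "x \<in> space M" for x
    using pw[of "f x" c "e x"] e1[OF that] by (simp add: mult.assoc)
  have int3: "integrable M (\<lambda>x. (cmod (f x))^2 - 2 * Re (cnj c * (f x * cnj (e x))) + (cmod c)^2)"
    apply (rule Bochner_Integration.integrable_add)
     apply (rule Bochner_Integration.integrable_diff)
      apply (rule fi)
     apply (rule Bochner_Integration.integrable_mult_right)
     apply (rule int2)
    apply (rule integrable_const)
    done
  show "integrable M (\<lambda>x. (cmod (f x - c * e x))^2)"
    by (rule iffD1[OF Bochner_Integration.integrable_cong[OF refl] int3]) (simp add: pwx)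
  have "(LINT x|M. (cmod (f x - c*e x))^2) = (LINT x|M. (cmod (f x))^2 - 2 * Re (cnj c * (f x * cnj (e x))) + (cmod c)^2)"
    by (rule Bochner_Integration.integral_cong[OF refl]) (simp add: pwx)
  also have "\<dots> = (LINT x|M. (cmod (f x))^2) - (LINT x|M. 2 * Re (cnj c * (f x * cnj (e x)))) + (LINT x|M. (cmod c)^2)"
    using fi int2 by (simp only: Bochner_Integration.integral_add Bochner_Integration.integral_diff Bochner_Integration.integrable_add Bochner_Integration.integrable_diff Bochner_Integration.integrable_mult_right integrable_const)
  also have "(LINT x|M. 2 * Re (cnj c * (f x * cnj (e x)))) = 2 * Re (cnj c * a)"
    using int1 by (simp only: Bochner_Integration.integral_mult_right_zero Bochner_Integration.integral_Re Bochner_Integration.integrable_mult_right a_def)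
  also have "(LINT x|M. (cmod c)^2) = (cmod c)^2 * m"
    by (simp add: m_def)
  also have "Re (cnj c * a) = (cmod a)^2 / m"
    using cmod_power2[of a] by (simp add: c_def m_def power2_eq_square field_simps)
  also have "(cmod c)^2 * m = (cmod a)^2 / m"
    using mpos by (simp add: c_def m_def norm_divide power2_eq_square field_simps)
  finally show "(LINT x|M. (cmod (f x - c*e x))^2) = (LINT x|M. (cmod (f x))^2) - (cmod a)^2 / measure M (space M)"
    by (simp add: m_def)
qed

lemma alg: fixes X s n m Ms Qs \<sigma> :: real
  assumes n: "n > 0" and m: "m > 0" and sg: "\<sigma> > 0" and s: "s > \<sigma>*n" and Ms: "Ms \<ge> 0"
    and eta: "Ms*\<sigma>/2 - Qs > 0" and X: "X \<le> s/m*Qs + Ms*(n - (s^2/m)/(2*n))"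
  shows "X/n \<le> Ms - \<sigma>*(Ms*\<sigma>/2 - Qs)/m"
proof -
  have idt: "s*(Ms* s/(2*n) - Qs) - \<sigma>*n*(Ms*\<sigma>/2 - Qs) = (s - \<sigma>*n)*(Ms*(s+\<sigma>*n)/(2*n) - Qs)"
    using n by (simp add: field_simps power2_eq_square)
  have "Ms*(s+\<sigma>*n)/(2*n) \<ge> Ms*(2*\<sigma>*n)/(2*n)"
    using n s Ms by (intro divide_right_mono mult_left_mono) auto
  then have f2: "Ms*(s+\<sigma>*n)/(2*n) - Qs \<ge> 0" using n eta mult_nonneg_nonneg[OF Ms, of \<sigma>] sg by simp
  have "(s - \<sigma>*n)*(Ms*(s+\<sigma>*n)/(2*n) - Qs) \<ge> 0" using s f2 by simp
  with idt have key: "s*(Ms* s/(2*n) - Qs) \<ge> \<sigma>*n*(Ms*\<sigma>/2 - Qs)" by linarith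
  have "s/m*Qs + Ms*(n - (s^2/m)/(2*n)) = Ms*n - s*(Ms* s/(2*n) - Qs)/m"
    using n m by (simp add: field_simps power2_eq_square)
  also have "\<dots> \<le> Ms*n - \<sigma>*n*(Ms*\<sigma>/2 - Qs)/m"
    using key m by (simp add: divide_right_mono)
  finally have "X \<le> n * (Ms - \<sigma>*(Ms*\<sigma>/2 - Qs)/m)" using X by (simp add: algebra_simps)
  then show ?thesis using n by (simp add: divide_le_eq mult.commute)
qed

lemma sq: fixes n y :: real assumes "0 < n" "0 \<le> y" "y \<le> n^2" shows "sqrt (n^2 - y) \<le> n - y/(2*n)"
proof -
  have h: "0 \<le> n - y/(2*n)" using assms by (simp add: field_simps power2_eq_square)
  have "n^2 - y \<le> (n - y/(2*n))^2" using assms by (simp add: field_simps power2_eq_square)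
  then have "sqrt (n^2 - y) \<le> sqrt ((n - y/(2*n))^2)" by (rule real_sqrt_le_mono)
  then show ?thesis using h by simp
qed

lemma expcnj: "exp (- \<i> * complex_of_real t) = cnj (expi (\<lambda>_. t) x)"
proof -
  have "cnj (cis t) = cis (-t)" by (simp add: cis_cnj)
  also have "\<dots> = exp (\<i> * complex_of_real (-t))" by (rule cis_conv_exp)
  finally show ?thesis by (simp add: expi_def cis_conv_exp)
qed


theorem theorem7p2:
  fixes I :: "real set" and \<sigma> :: real and \<Q> :: "(real \<Rightarrow> real) set"
    and L :: "(real \<Rightarrow> complex) \<Rightarrow> complex"
  assumes "is_interval I" and "bounded I"
    and "0 < \<sigma>" and "\<sigma> \<le> 1"
    and "\<Q> \<subseteq> borel_measurable (lebesgue_on I)"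
    and "sublinear_on (L2 I) L" and "bounded_functional I L"
    and "f \<in> L2 I"
  shows "cmod (L f) \<le>
           max (SUP g\<in>{g\<in>L2 I. sigma_uniform I \<sigma> \<Q> g \<and> L2norm I g \<noteq> 0}. cmod (L g) / L2norm I g)
               (2 / \<sigma> * (SUP q\<in>\<Q>. cmod (L (expi q)))) * L2norm I f"
proof -
  note fa = assms(8)
  define N where "N = lebesgue_on I"
  have Ilm: "I \<in> lmeasurable"
    using measurable_convex[OF is_interval_convex[OF assms(1)] assms(2)] .
  have Isets: "I \<in> sets lebesgue" using Ilm by (simp add: fmeasurable_def)
  have fin: "finite_measure N" unfolding N_def using finite_measure_lebesgue_on[OF Ilm] .
  have spN: "space N = I" by (simp add: N_def)
  define m where "m = measure N (space N)"
  obtain A where A: "\<And>g. g \<in> L2 I \<Longrightarrow> cmod (L g) \<le> A * L2norm I g"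
    using assms(7) unfolding bounded_functional_def by blast
  have sub_add: "\<And>g h. g \<in> L2 I \<Longrightarrow> h \<in> L2 I \<Longrightarrow> cmod (L (\<lambda>x. g x + h x)) \<le> cmod (L g) + cmod (L h)"
    using assms(6) unfolding sublinear_on_def by blast
  have sub_hom: "\<And>g c. g \<in> L2 I \<Longrightarrow> cmod (L (\<lambda>x. c * g x)) = cmod c * cmod (L g)"
    using assms(6) unfolding sublinear_on_def by blast
  have nn: "\<And>g. L2norm I g \<ge> 0" unfolding L2norm_def
    by (simp add: Bochner_Integration.integral_nonneg)
  have sqn: "\<And>g. (L2norm I g)^2 = (LINT x|N. (cmod (g x))^2)" unfolding L2norm_def N_def
    by (simp add: Bochner_Integration.integral_nonneg)
  have L2D: "\<And>g. g \<in> L2 I \<Longrightarrow> g \<in> borel_measurable N \<and> integrable N (\<lambda>x. (cmod (g x))^2)"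
    unfolding L2_def N_def by blast
  have L2I: "\<And>g. g \<in> borel_measurable N \<Longrightarrow> integrable N (\<lambda>x. (cmod (g x))^2) \<Longrightarrow> g \<in> L2 I"
    unfolding L2_def N_def by blast
  have zero: "\<And>g. g \<in> L2 I \<Longrightarrow> L2norm I g = 0 \<Longrightarrow> cmod (L g) = 0"
    using A by (metis mult_zero_right norm_ge_zero order_antisym)
  have scal: "\<And>g c. g \<in> L2 I \<Longrightarrow> (\<lambda>x. c * g x) \<in> L2 I"
  proof -
    fix g and c :: complex assume g: "g \<in> L2 I"
    show "(\<lambda>x. c * g x) \<in> L2 I"
    proof (rule L2I)
      show "(\<lambda>x. c * g x) \<in> borel_measurable N" using conjunct1[OF L2D[OF g]] by measurable
      have "integrable N (\<lambda>x. (cmod c)^2 * (cmod (g x))^2)"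
        using L2D[OF g] by (intro Bochner_Integration.integrable_mult_right) auto
      then show "integrable N (\<lambda>x. (cmod (c * g x))^2)"
        by (simp add: norm_mult power_mult_distrib)
    qed
  qed
  have em: "\<And>q. q \<in> \<Q> \<Longrightarrow> expi q \<in> borel_measurable N"
  proof -
    fix q assume "q \<in> \<Q>"
    then have qm: "q \<in> borel_measurable N" using assms(5) by (auto simp: N_def)
    show "expi q \<in> borel_measurable N" unfolding expi_def using qm by measurable
  qed
  have e1: "\<And>q x. cmod (expi q x) = 1" by (simp add: expi_def)
  have eL2: "\<And>q. q \<in> \<Q> \<Longrightarrow> expi q \<in> L2 I"
  proof -
    fix q assume q: "q \<in> \<Q>"
    show "expi q \<in> L2 I"
      using em[OF q] finite_measure.integrable_const[OF fin] by (intro L2I) (simp_all add: e1)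
  qed
  have eN: "\<And>q. L2norm I (expi q) = sqrt m"
    by (simp add: L2norm_def e1 m_def N_def)
  define R where "R = (\<lambda>g. cmod (L g) / L2norm I g) ` {g\<in>L2 I. L2norm I g \<noteq> 0}"
  have ratio_le: "\<And>g. g \<in> L2 I \<Longrightarrow> L2norm I g \<noteq> 0 \<Longrightarrow> cmod (L g) / L2norm I g \<le> A"
  proof -
    fix g assume g: "g \<in> L2 I" and ng: "L2norm I g \<noteq> 0"
    then have "L2norm I g > 0" using nn[of g] by simp
    then show "cmod (L g) / L2norm I g \<le> A" using A[OF g] by (simp add: divide_le_eq mult.commute)
  qed
  have bddR: "bdd_above R" unfolding R_def using ratio_le by (auto intro!: bdd_aboveI2)
  define SU where "SU = {g\<in>L2 I. sigma_uniform I \<sigma> \<Q> g \<and> L2norm I g \<noteq> 0}"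
  define U where "U = (SUP g\<in>SU. cmod (L g) / L2norm I g)"
  have bddU: "bdd_above ((\<lambda>g. cmod (L g) / L2norm I g) ` SU)"
    using bddR unfolding R_def SU_def by (rule bdd_above_mono) auto
  have Ub: "\<And>g. g \<in> SU \<Longrightarrow> cmod (L g) / L2norm I g \<le> U"
    unfolding U_def using bddU by (intro cSup_upper) auto
  define QS where "QS = (\<lambda>q. cmod (L (expi q))) ` \<Q>"
  have bddQ: "bdd_above QS" unfolding QS_def
    by (rule bdd_aboveI2[where M="A * sqrt m"]) (metis A eL2 eN)
  define Qs where "Qs = (SUP q\<in>\<Q>. cmod (L (expi q)))"
  have Qb: "\<And>q. q \<in> \<Q> \<Longrightarrow> cmod (L (expi q)) \<le> Qs"
    unfolding Qs_def using bddQ unfolding QS_def by (intro cSup_upper) auto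
  define K where "K = max U (2 / \<sigma> * Qs)"
  define n0 where "n0 = L2norm I f"
  show ?thesis
    unfolding SU_def[symmetric] U_def[symmetric] Qs_def[symmetric] K_def[symmetric] n0_def[symmetric]
  proof (rule ccontr)
    assume contra: "\<not> cmod (L f) \<le> K * n0"
    have n0nz: "n0 \<noteq> 0" using contra zero[OF fa] by (auto simp: n0_def)
    then have n0pos: "n0 > 0" using nn[of f] by (simp add: n0_def)
    have r0K: "K < cmod (L f) / n0" using contra n0pos by (simp add: less_divide_eq)
    have r0R: "cmod (L f) / n0 \<in> R" unfolding R_def n0_def using fa n0nz n0_def by auto
    define Ms where "Ms = Sup R"
    have "cmod (L f) / n0 \<le> Ms" unfolding Ms_def using r0R bddR by (rule cSup_upper)
    then have MsK: "K < Ms" using r0K by linarith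
    have Ms0: "Ms \<ge> 0" using \<open>cmod (L f) / n0 \<le> Ms\<close> n0pos by (smt (verit) divide_nonneg_pos norm_ge_zero)
    have Mb: "\<And>g. g \<in> L2 I \<Longrightarrow> cmod (L g) \<le> Ms * L2norm I g"
    proof -
      fix g assume g: "g \<in> L2 I"
      show "cmod (L g) \<le> Ms * L2norm I g"
      proof (cases "L2norm I g = 0")
        case True then show ?thesis using zero[OF g] by simp
      next
        case False
        then have pos: "L2norm I g > 0" using nn[of g] by simp
        have "cmod (L g) / L2norm I g \<in> R" unfolding R_def using g False by auto
        then have "cmod (L g) / L2norm I g \<le> Ms" unfolding Ms_def using bddR by (rule cSup_upper)
        then show ?thesis using pos by (simp add: divide_le_eq)
      qed
    qed
    have mpos: "m > 0"
    proof (rule ccontr)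
      assume "\<not> m > 0"
      then have "m = 0" using measure_nonneg[of N "space N"] by (simp add: m_def)
      then have "emeasure N (space N) = 0"
        using finite_measure.emeasure_eq_measure[OF fin] by (simp add: m_def)
      then have "space N \<in> null_sets N" by (auto intro: null_setsI)
      then have "AE x in N. (cmod (f x))^2 = 0" by (rule AE_I') auto
      then have "(LINT x|N. (cmod (f x))^2) = 0" by (rule integral_eq_zero_AE)
      then have "n0^2 = 0" using sqn[of f] by (simp add: n0_def)
      then show False using n0nz by simp
    qed
    define \<eta> where "\<eta> = Ms*\<sigma>/2 - Qs"
    have etapos: "\<eta> > 0"
    proof -
      have "2 / \<sigma> * Qs < Ms" using MsK unfolding K_def by linarith
      then have "2 * Qs < Ms * \<sigma>" using assms(3) by (simp add: field_simps)
      then show ?thesis unfolding \<eta>_def by simp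
    qed
    define \<delta> where "\<delta> = \<sigma>*\<eta>/m"
    have dpos: "\<delta> > 0" unfolding \<delta>_def using assms(3) etapos mpos by simp
    have "max K (Ms - \<delta>) < Ms" using MsK dpos by simp
    moreover have "R \<noteq> {}" using r0R by auto
    ultimately obtain r where rR: "r \<in> R" and rgt: "max K (Ms - \<delta>) < r"
      unfolding Ms_def using less_cSup_iff[OF _ bddR] by blast
    then obtain g where g: "g \<in> L2 I" and ngnz: "L2norm I g \<noteq> 0" and rdef: "r = cmod (L g) / L2norm I g"
      unfolding R_def by auto
    define ng where "ng = L2norm I g"
    have ngpos: "ng > 0" using ngnz nn[of g] by (simp add: ng_def)
    show False
    proof (cases "sigma_uniform I \<sigma> \<Q> g")
      case True
      then have "g \<in> SU" unfolding SU_def using g ngnz by auto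
      then have "r \<le> U" using Ub rdef by simp
      then show False using rgt unfolding K_def by simp
    next
      case False
      then obtain q where q: "q \<in> \<Q>" and qa: "cmod (LINT \<xi>|lebesgue_on I. g \<xi> * exp (- \<i> * complex_of_real (q \<xi>))) > \<sigma> * ng"
        unfolding sigma_uniform_def ng_def by auto
      define e where "e = expi q"
      define a where "a = (LINT x|N. g x * cnj (e x))"
      have aeq: "(LINT \<xi>|lebesgue_on I. g \<xi> * exp (- \<i> * complex_of_real (q \<xi>))) = a"
        unfolding a_def N_def e_def using expcnj[of "q _"]
        by (simp add: expi_def)
      have sa: "cmod a > \<sigma> * ng" using qa aeq by simp
      define c where "c = a / of_real m"
      define h where "h = (\<lambda>x. g x - c * e x)"
      have D: "(\<lambda>x. g x - c * e x) \<in> borel_measurable N"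
        "integrable N (\<lambda>x. (cmod (g x - c * e x))^2)"
        "(LINT x|N. (cmod (g x - c*e x))^2) = (LINT x|N. (cmod (g x))^2) - (cmod a)^2 / measure N (space N)"
        using decomp[OF fin _ _ _ _ _ a_def, of c] mpos L2D[OF g] em[OF q] e1 unfolding m_def e_def c_def
        by auto
      have hL2: "h \<in> L2 I" unfolding h_def using D by (intro L2I) auto
      have eL: "e \<in> L2 I" unfolding e_def using eL2[OF q] .
      have ceL: "(\<lambda>x. c * e x) \<in> L2 I" using scal[OF eL] .
      have gdec: "g = (\<lambda>x. c * e x + h x)" unfolding h_def by auto
      have "cmod (L g) \<le> cmod (L (\<lambda>x. c * e x)) + cmod (L h)"
        using sub_add[OF ceL hL2] gdec by simp
      also have "\<dots> = cmod c * cmod (L e) + cmod (L h)" using sub_hom[OF eL] by simp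
      also have "\<dots> \<le> cmod c * Qs + Ms * L2norm I h"
        using Qb[OF q] Mb[OF hL2] unfolding e_def by (intro add_mono mult_left_mono) auto
      finally have X1: "cmod (L g) \<le> cmod c * Qs + Ms * L2norm I h" .
      have hn2: "(L2norm I h)^2 = ng^2 - (cmod a)^2 / m"
        using sqn[of h] sqn[of g] D(3) unfolding h_def ng_def m_def by simp
      have hn: "L2norm I h = sqrt (ng^2 - (cmod a)^2 / m)"
        using hn2 nn[of h] by (metis real_sqrt_unique)
      have y0: "0 \<le> (cmod a)^2 / m" using mpos by simp
      have y1: "(cmod a)^2 / m \<le> ng^2" using hn2 zero_le_power2[of "L2norm I h"] by linarith
      have "L2norm I h \<le> ng - ((cmod a)^2 / m)/(2*ng)"
        unfolding hn using sq[OF ngpos y0 y1] .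
      then have X2: "cmod (L g) \<le> cmod a / m * Qs + Ms * (ng - ((cmod a)^2 / m)/(2*ng))"
        using X1 Ms0 mpos unfolding c_def
        by (smt (verit) mult_left_mono norm_divide norm_of_real)
      have "cmod (L g) / ng \<le> Ms - \<sigma>*(Ms*\<sigma>/2 - Qs)/m"
        using alg[OF ngpos mpos assms(3) sa Ms0 _ X2] etapos unfolding \<eta>_def by simp
      then have "r \<le> Ms - \<delta>" unfolding rdef \<delta>_def \<eta>_def ng_def by simp
      then show False using rgt by simp
    qed
  qed
qed

end
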